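(* Let $\mathcal{D}$ be a dome over a convex polygon $P$ lying in the $xy$-plane with the dome above it. Let $b_i$ be a vertex of $P$ with interior angle at least $120^\circ$, with incident dome triangles $t_1, t_2, t_3$ in order around $b_i$, where $t_1$ and $t_3$ are incident to the two edges of $P$ at $b_i$. If $t_1$ has a downward normal, then $t_1$ is not coplanar with $t_2$, and hence the face of $\mathcal{D}$ containing $t_1$ has face angle $60^\circ$ at $b_i$.
   Context: All equilateral triangles have unit edge length. A polyiamond is a polygon that is a union of unit equilateral triangles. A dome over a convex polygon $P$ is the surface consisting of all faces other than $P$ of a convex polyhedron that has $P$ as one face and all of whose other faces are convex polyiamonds; the dome triangles are the unit triangles composing the dome's faces. A triangle or face has a downward (upward) normal if its outward normal has negative (positive) $z$-component. *)

theory Defs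
  imports "HOL-Analysis.Analysis"
begin

type_synonym pt = "real^3"

definition vec_angle :: "pt \<Rightarrow> pt \<Rightarrow> real" where
  "vec_angle u v = arccos ((u \<bullet> v) / (norm u * norm v))"

text \<open>Interior angle of a convex polygon F at its vertex b: the largest angle
  subtended at b by two points of F.\<close>
definition face_angle :: "pt set \<Rightarrow> pt \<Rightarrow> real" where
  "face_angle F b = Sup {vec_angle (x - b) (y - b) | x y. x \<in> F \<and> y \<in> F \<and> x \<noteq> b \<and> y \<noteq> b}"

definition unit_triangle :: "pt set \<Rightarrow> bool" where
  "unit_triangle t \<longleftrightarrow> (\<exists>a b c. t = convex hull {a, b, c} \<and>
      dist a b = 1 \<and> dist b c = 1 \<and> dist a c = 1)"

definition convex_polyiamond :: "pt set \<Rightarrow> bool" where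
  "convex_polyiamond F \<longleftrightarrow> convex F \<and> aff_dim F = 2 \<and>
     (\<exists>S. finite S \<and> (\<forall>t\<in>S. unit_triangle t) \<and> \<Union>S = F \<and>
        (\<forall>t\<in>S. \<forall>t'\<in>S. t \<noteq> t' \<longrightarrow> rel_interior t \<inter> rel_interior t' = {}))"

text \<open>Q is a convex polyhedron having P as a face, all other faces (facets) being
  convex polyiamonds; T is the set of dome triangles, i.e. the unit triangles
  composing the faces of the dome (the facets of Q other than P).\<close>
definition dome :: "pt set \<Rightarrow> pt set \<Rightarrow> pt set set \<Rightarrow> bool" where
  "dome Q P T \<longleftrightarrow> polytope Q \<and> aff_dim Q = 3 \<and> P facet_of Q \<and>
     (\<forall>F. F facet_of Q \<and> F \<noteq> P \<longrightarrow> convex_polyiamond F) \<and>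
     finite T \<and> (\<forall>t\<in>T. unit_triangle t) \<and>
     (\<forall>t\<in>T. \<exists>F. F facet_of Q \<and> F \<noteq> P \<and> t \<subseteq> F) \<and>
     (\<forall>F. F facet_of Q \<and> F \<noteq> P \<longrightarrow> \<Union>{t\<in>T. t \<subseteq> F} = F) \<and>
     (\<forall>t\<in>T. \<forall>t'\<in>T. t \<noteq> t' \<longrightarrow> rel_interior t \<inter> rel_interior t' = {})"

text \<open>A dome triangle t has a downward normal: its outward normal (as part of the
  boundary of Q) has negative z-component.\<close>
definition downward_normal :: "pt set \<Rightarrow> pt set \<Rightarrow> bool" where
  "downward_normal Q t \<longleftrightarrow> (\<exists>n d. n $ 3 < 0 \<and> (\<forall>x\<in>Q. n \<bullet> x \<le> d) \<and> (\<forall>x\<in>t. n \<bullet> x = d))"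

end

theory Submission
  imports Defs
begin


lemma inner3: "(x::real^3) \<bullet> y = x$1*y$1 + x$2*y$2 + x$3*y$3"
  by (simp add: inner_vec_def sum_3)

lemma poly60:
  fixes a b c d :: real
  assumes "a \<ge> 0" "b \<ge> 0" "c \<ge> 0" "d \<ge> 0"
  shows "(a*a+a*b+b*b)*(c*c+c*d+d*d) \<le> (2*a*c+2*b*d+a*d+b*c)^2"
  using assms by (sos)

lemma cone60:
  fixes x y :: "real^3"
  assumes "norm x = 1" "norm y = 1" "x \<bullet> y = 1/2"
    and "a \<ge> 0" "b \<ge> 0" "c \<ge> 0" "d \<ge> 0"
  shows "norm (a *\<^sub>R x + b *\<^sub>R y) * norm (c *\<^sub>R x + d *\<^sub>R y)
           \<le> 2 * ((a *\<^sub>R x + b *\<^sub>R y) \<bullet> (c *\<^sub>R x + d *\<^sub>R y))"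
proof -
  have xx: "x \<bullet> x = 1" "y \<bullet> y = 1" using assms(1,2) by (simp_all add: dot_square_norm)
  have yx: "y \<bullet> x = 1/2" using assms(3) by (simp add: inner_commute)
  let ?p = "a *\<^sub>R x + b *\<^sub>R y" and ?q = "c *\<^sub>R x + d *\<^sub>R y"
  have pq: "?p \<bullet> ?q = a*c + b*d + (a*d+b*c)/2"
    by (simp add: inner_add_left inner_add_right xx yx assms(3) algebra_simps)
  have pp: "?p \<bullet> ?p = a*a+a*b+b*b"
    by (simp add: inner_add_left inner_add_right xx yx assms(3) algebra_simps)
  have qq: "?q \<bullet> ?q = c*c+c*d+d*d"
    by (simp add: inner_add_left inner_add_right xx yx assms(3) algebra_simps)
  have "norm ?p * norm ?q = sqrt ((?p \<bullet> ?p) * (?q \<bullet> ?q))"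
    by (simp add: norm_eq_sqrt_inner real_sqrt_mult)
  also have "\<dots> \<le> sqrt ((2 * (?p \<bullet> ?q))^2)"
  proof (rule real_sqrt_le_mono)
    have e: "2 * (?p \<bullet> ?q) = 2*a*c+2*b*d+a*d+b*c" using pq by simp
    show "(?p \<bullet> ?p) * (?q \<bullet> ?q) \<le> (2 * (?p \<bullet> ?q))^2"
      unfolding e pp qq using poly60[OF assms(4-7)] .
  qed
  also have "\<dots> = 2 * (?p \<bullet> ?q)"
    using assms(4-7) unfolding pq by simp
  finally show ?thesis .
qed

lemma ch3:
  "p \<in> convex hull {b, b + x, b + y} \<longleftrightarrow>
     (\<exists>l m. l \<ge> 0 \<and> m \<ge> 0 \<and> l + m \<le> 1 \<and> p = b + l *\<^sub>R x + m *\<^sub>R y)"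
proof
  assume "p \<in> convex hull {b, b + x, b + y}"
  then obtain u v w where "0 \<le> u" "0 \<le> v" "0 \<le> w" "u + v + w = 1"
    "p = u *\<^sub>R b + v *\<^sub>R (b + x) + w *\<^sub>R (b + y)"
    unfolding convex_hull_3 by blast
  then show "\<exists>l m. l \<ge> 0 \<and> m \<ge> 0 \<and> l + m \<le> 1 \<and> p = b + l *\<^sub>R x + m *\<^sub>R y"
    apply (rule_tac x=v in exI, rule_tac x=w in exI)
    apply (simp add: algebra_simps)
    by (metis (no_types, lifting) add.commute add.left_commute scaleR_add_left scaleR_one)
next
  assume "\<exists>l m. l \<ge> 0 \<and> m \<ge> 0 \<and> l + m \<le> 1 \<and> p = b + l *\<^sub>R x + m *\<^sub>R y"
  then obtain l m where lm: "l \<ge> 0" "m \<ge> 0" "l + m \<le> 1" "p = b + l *\<^sub>R x + m *\<^sub>R y" by blast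
  have e: "p = (1 - l - m) *\<^sub>R b + l *\<^sub>R (b + x) + m *\<^sub>R (b + y)"
    using lm(4) by (simp add: algebra_simps)
  show "p \<in> convex hull {b, b + x, b + y}"
    unfolding convex_hull_3
    by (intro CollectI exI[of _ "1-l-m"] exI[of _ l] exI[of _ m]) (use lm e in auto)
qed

lemma ez3: "(axis 3 1 :: real^3) \<bullet> x = x$3"
  by (simp add: inner_axis')

lemma sqdiff: "((p::real^3) - q) \<bullet> (p - q) = p \<bullet> p - 2 * (p \<bullet> q) + q \<bullet> q"
  by (simp add: inner_diff_left inner_diff_right inner_commute)

lemma unit_pair:
  fixes b c d :: "real^3"
  assumes "dist b c = 1" "dist b d = 1" "dist c d = 1"
  shows "\<exists>x y. {b, c, d} = {b, b+x, b+y} \<and> norm x = 1 \<and> norm y = 1 \<and> x \<bullet> y = 1/2"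
proof (intro exI conjI)
  let ?x = "c - b" and ?y = "d - b"
  show "{b, c, d} = {b, b + ?x, b + ?y}" by simp
  show nx: "norm ?x = 1" using assms(1) by (simp add: dist_norm norm_minus_commute)
  show ny: "norm ?y = 1" using assms(2) by (simp add: dist_norm norm_minus_commute)
  have "norm (?x - ?y) = 1" using assms(3) by (simp add: dist_norm)
  then have "(?x - ?y) \<bullet> (?x - ?y) = 1" by (simp add: dot_square_norm)
  moreover have "?x \<bullet> ?x = 1" "?y \<bullet> ?y = 1" using nx ny by (simp_all add: dot_square_norm)
  moreover have "(?x - ?y) \<bullet> (?x - ?y) = ?x \<bullet> ?x - 2 * (?x \<bullet> ?y) + ?y \<bullet> ?y"
    using sqdiff by blast
  ultimately show "?x \<bullet> ?y = 1/2" by linarith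
qed

lemma tri_vertex:
  assumes "unit_triangle t" "b extreme_point_of t"
  shows "\<exists>x y. t = convex hull {b, b+x, b+y} \<and> norm x = 1 \<and> norm y = 1 \<and> x \<bullet> y = 1/2"
proof -
  obtain a1 a2 a3 where t: "t = convex hull {a1,a2,a3}" and d: "dist a1 a2 = 1" "dist a2 a3 = 1" "dist a1 a3 = 1"
    using assms(1) unfolding unit_triangle_def by blast
  have "b \<in> {a1,a2,a3}" using assms(2) t extreme_point_of_convex_hull by blast
  then consider "b = a1" | "b = a2" | "b = a3" by blast
  then show ?thesis
  proof cases
    case 1
    obtain x y where "{b,a2,a3} = {b,b+x,b+y}" "norm x = 1" "norm y = 1" "x \<bullet> y = 1/2"
      using unit_pair[of b a2 a3] d 1 by blast
    then show ?thesis using t 1 by (intro exI[of _ x] exI[of _ y]) auto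
  next
    case 2
    have e: "{a1,a2,a3} = {a2,a1,a3}" by blast
    obtain x y where "{b,a1,a3} = {b,b+x,b+y}" "norm x = 1" "norm y = 1" "x \<bullet> y = 1/2"
      using unit_pair[of b a1 a3] d 2 by (auto simp: dist_commute)
    then show ?thesis using t 2 e by (intro exI[of _ x] exI[of _ y]) auto
  next
    case 3
    have e: "{a1,a2,a3} = {a3,a1,a2}" by blast
    obtain x y where "{b,a1,a2} = {b,b+x,b+y}" "norm x = 1" "norm y = 1" "x \<bullet> y = 1/2"
      using unit_pair[of b a1 a2] d 3 by (auto simp: dist_commute)
    then show ?thesis using t 3 e by (intro exI[of _ x] exI[of _ y]) auto
  qed
qed



lemma indep3:
  fixes x y b :: "real^3"
  assumes "norm x = 1" "norm y = 1" "x \<bullet> y = 1/2"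
  shows "\<not> affine_dependent {b, b+x, b+y}" "b \<noteq> b + x" "b \<noteq> b + y" "b + x \<noteq> b + y"
proof -
  have xx: "x \<bullet> x = 1" "y \<bullet> y = 1" using assms(1,2) by (simp_all add: dot_square_norm)
  have x0: "x \<noteq> 0" using assms(1) by auto
  have y0: "y \<noteq> 0" using assms(2) by auto
  show d1: "b \<noteq> b + x" using x0 by simp
  show d2: "b \<noteq> b + y" using y0 by simp
  have xy: "x \<noteq> y"
  proof
    assume "x = y" then have "x \<bullet> y = 1" using xx by simp
    then show False using assms(3) by simp
  qed
  show d3: "b + x \<noteq> b + y" using xy by simp
  have "\<not> collinear {b, b+x, b+y}"
  proof
    assume "collinear {b, b+x, b+y}"
    moreover have "collinear {b, b+x, b+y} = collinear {0, b - (b+x), (b+y) - (b+x)}"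
      by (rule collinear_3) (simp add: NO_MATCH_def)
    ultimately have "collinear {0, -x, y - x}" by simp
    then have "-x = 0 \<or> y - x = 0 \<or> (\<exists>c. y - x = c *\<^sub>R (-x))"
      by (simp only: collinear_lemma)
    moreover have "-x \<noteq> 0" using x0 by simp
    moreover have "y - x \<noteq> 0" using xy by simp
    ultimately obtain c where c: "y - x = c *\<^sub>R (-x)" by blast
    then have yy: "y = (1 - c) *\<^sub>R x" by (simp add: algebra_simps)
    then have "x \<bullet> y = 1 - c" using xx by simp
    then have "c = 1/2" using assms(3) by simp
    then have "norm y = 1/2" using yy assms(1) by simp
    then show False using assms(2) by simp
  qed
  then show "\<not> affine_dependent {b, b+x, b+y}"
    using collinear_3_eq_affine_dependent d1 d2 d3 by blast
qed

lemma affdim_tri: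
  fixes x y b :: "real^3"
  assumes "norm x = 1" "norm y = 1" "x \<bullet> y = 1/2"
  shows "aff_dim (convex hull {b, b+x, b+y}) = 2"
proof -
  note i = indep3[OF assms, of b]
  have c: "card {b, b+x, b+y} = 3" using i(2-4) by (simp add: card_insert_if)
  have "of_nat (card {b, b+x, b+y}) = aff_dim {b, b+x, b+y} + 1"
    by (rule aff_dim_affine_independent) (rule i(1))
  then have "aff_dim {b, b+x, b+y} = 2" unfolding c by simp
  then show ?thesis by (simp only: aff_dim_convex_hull)
qed



lemma relint_tri:
  fixes x y b :: "real^3"
  assumes "norm x = 1" "norm y = 1" "x \<bullet> y = 1/2" "l > 0" "m > 0" "l + m < 1"
  shows "b + l *\<^sub>R x + m *\<^sub>R y \<in> rel_interior (convex hull {b, b+x, b+y})"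
proof -
  note i = indep3[OF assms(1-3), of b]
  define u where "u = (\<lambda>p. if p = b then 1 - l - m else if p = b + x then l else m)"
  have s1: "sum u {b, b+x, b+y} = 1" using i(2-4) by (simp add: u_def)
  have s2: "(\<Sum>p\<in>{b, b+x, b+y}. u p *\<^sub>R p) = b + l *\<^sub>R x + m *\<^sub>R y"
    using i(2-4) by (simp add: u_def algebra_simps)
  have pos: "\<forall>p\<in>{b, b+x, b+y}. 0 < u p" using assms(4-6) i(2-4) by (auto simp: u_def)
  show ?thesis
    unfolding rel_interior_convex_hull_explicit[OF i(1)] using s1 s2 pos by blast
qed

lemma relint_meet:
  fixes S T :: "pt set"
  assumes "convex T" "T \<subseteq> affine hull S" "y \<in> rel_interior S" "y \<in> T"
  shows "rel_interior S \<inter> rel_interior T \<noteq> {}"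
proof -
  obtain e where e: "e > 0" "ball y e \<inter> affine hull S \<subseteq> rel_interior S"
    using openin_rel_interior[of S] assms(3) unfolding openin_contains_ball by blast
  have "y \<in> closure (rel_interior T)"
    using convex_closure_rel_interior[OF assms(1)] assms(4) closure_subset by blast
  then obtain y' where y': "y' \<in> rel_interior T" "dist y y' < e"
    using closure_approachableD e(1) by blast
  have "y' \<in> T" using y'(1) rel_interior_subset by blast
  then have "y' \<in> rel_interior S" using e y'(2) assms(2) by auto
  then show ?thesis using y'(1) by blast
qed

lemma facet_floor:
  fixes Q F P :: "pt set"
  assumes "polytope Q" "aff_dim Q = 3" "Q \<subseteq> {x. x$3 \<ge> 0}" "F facet_of Q" "F \<subseteq> {x. x$3 = 0}"
    "P facet_of Q" "P \<subseteq> {x. x$3 = 0}"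
  shows "F = P"
proof -
  define G where "G = Q \<inter> {x. axis 3 1 \<bullet> x = 0}"
  have cQ: "convex Q" using assms(1) polytope_imp_convex by blast
  have Gf: "G face_of Q" unfolding G_def
    by (rule face_of_Int_supporting_hyperplane_ge[OF cQ]) (use assms(3) in \<open>auto simp: ez3\<close>)
  have cG: "convex G" using Gf face_of_imp_convex by blast
  have "aff_dim G \<le> aff_dim {x::pt. axis 3 1 \<bullet> x = 0}"
    unfolding G_def by (rule aff_dim_subset) blast
  also have "\<dots> = 2" by (subst aff_dim_hyperplane) (auto simp: axis_eq_0_iff)
  finally have aG: "aff_dim G \<le> 2" .
  have key: "H = G" if "H facet_of Q" "H \<subseteq> {x. x$3 = 0}" for H
  proof (rule ccontr)
    assume ne: "H \<noteq> G"
    have Hf: "H face_of Q" "aff_dim H = 2" using that(1) assms(2) by (auto simp: facet_of_def)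
    have "H \<subseteq> G" using that(2) face_of_imp_subset[OF Hf(1)] by (auto simp: G_def ez3)
    then have "H face_of G" using face_of_subset Hf(1) face_of_imp_subset[OF Gf] by blast
    then have "aff_dim H < aff_dim G" using face_of_aff_dim_lt[OF cG] ne by blast
    then show False using aG Hf(2) by simp
  qed
  show ?thesis using key[OF assms(4,5)] key[OF assms(6,7)] by simp
qed



definition cfr :: "pt \<Rightarrow> pt \<Rightarrow> real" where
  "cfr u x = x$2*u$1 - x$1*u$2"

lemma cfr_lin: "cfr u (a *\<^sub>R x + c *\<^sub>R y) = a * cfr u x + c * cfr u y"
  by (simp add: cfr_def algebra_simps)

lemma cfr_self: "cfr u u = 0" by (simp add: cfr_def algebra_simps)

lemma frame:
  fixes u :: pt
  assumes "u$3 = 0" "norm u = 1"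
  shows "x \<bullet> y = (x \<bullet> u) * (y \<bullet> u) + cfr u x * cfr u y + x$3 * y$3"
proof -
  have "u \<bullet> u = 1" using assms(2) by (simp add: dot_square_norm)
  then have h: "u$1*u$1 + u$2*u$2 = 1" using assms(1) by (simp add: inner3)
  have "(x \<bullet> u) * (y \<bullet> u) + cfr u x * cfr u y + x$3 * y$3
        = (x$1*y$1 + x$2*y$2) * (u$1*u$1 + u$2*u$2) + x$3*y$3"
    by (simp add: inner3 cfr_def assms(1) algebra_simps)
  also have "\<dots> = x \<bullet> y" using h by (simp add: inner3)
  finally show ?thesis by simp
qed

lemma frame_eq:
  fixes u x y :: pt
  assumes "u$3 = 0" "norm u = 1" "x \<bullet> u = y \<bullet> u" "cfr u x = cfr u y" "x$3 = y$3"
  shows "x = y"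
proof -
  let ?d = "x - y"
  have "?d \<bullet> u = 0" using assms(3) by (simp add: inner_diff_left)
  moreover have "cfr u ?d = 0" using assms(4) by (simp add: cfr_def algebra_simps)
  moreover have "?d$3 = 0" using assms(5) by simp
  ultimately have "?d \<bullet> ?d = 0" using frame[OF assms(1,2), of ?d ?d] by simp
  then show ?thesis by simp
qed

lemma seg_in:
  fixes S :: "pt set"
  assumes "convex S" "a \<in> S" "a + k *\<^sub>R v \<in> S" "0 \<le> m" "m \<le> k" "k > 0"
  shows "a + m *\<^sub>R v \<in> S"
proof -
  have mk: "m/k \<le> 1" "0 \<le> m/k" using assms(4,5,6) by simp_all
  have "(1 - m/k) *\<^sub>R a + (m/k) *\<^sub>R (a + k *\<^sub>R v) \<in> S"
    by (rule convexD[OF assms(1,2,3)]) (use mk in auto)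
  moreover have "(1 - m/k) *\<^sub>R a + (m/k) *\<^sub>R (a + k *\<^sub>R v) = a + m *\<^sub>R v"
    using assms(6) by (simp add: algebra_simps)
  ultimately show ?thesis by simp
qed

lemma one_dim_other:
  assumes "aff_dim S = 1" "b \<in> S"
  shows "\<exists>p\<in>S. p \<noteq> b"
proof (rule ccontr)
  assume "\<not> (\<exists>p\<in>S. p \<noteq> b)"
  then have "S = {b}" using assms(2) by blast
  then show False using assms(1) by simp
qed

lemma polyA:
  fixes aa bb l m L :: real
  assumes "aa + bb < 0" "bb > 0" "l \<ge> 0" "m \<ge> 0" "l*l + l*m + m*m > 0"
    "aa*aa + aa*bb + bb*bb = 1" "L = 2*(aa*l + aa*m/2 + bb*l/2 + bb*m)" "L \<ge> 0"
    "L^2 \<ge> l*l+l*m+m*m"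
  shows False
proof -
  define e where "e = -(aa+bb)"
  have e0: "e > 0" using assms(1) by (simp add: e_def)
  have L: "L = -(l*(bb + 2*e)) + m*(bb - e)" using assms(7) by (simp add: e_def algebra_simps)
  have one: "bb*bb + bb*e + e*e = 1" using assms(6) by (simp add: e_def algebra_simps)
  have lpos: "l*(bb+2*e) \<ge> 0" using assms(3) assms(2) e0 by simp
  show False
  proof (cases "m = 0")
    case True
    then have "l*(bb+2*e) = 0" using L assms(8) lpos by simp
    moreover have "bb + 2*e \<noteq> 0" using assms(2) e0 by simp
    ultimately have "l = 0" by simp
    then show False using True assms(5) by simp
  next
    case False
    then have m0: "m > 0" using assms(4) by simp
    have le: "L \<le> m*(bb - e)" using L lpos by simp
    have "L^2 \<le> (m*(bb-e))^2" using le assms(8) by (simp add: power_mono)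
    also have "\<dots> < m*m*(bb*bb + bb*e + e*e)"
    proof -
      have be: "bb*e > 0" using assms(2) e0 by simp
      have "(bb-e)^2 = bb*bb - 2*(bb*e) + e*e" by (simp add: power2_eq_square algebra_simps)
      then have "(bb-e)^2 < bb*bb + bb*e + e*e" using be by linarith
      moreover have "m*m > 0" using m0 by simp
      ultimately have "m*m*(bb-e)^2 < m*m*(bb*bb + bb*e + e*e)" by (rule mult_strict_left_mono)
      moreover have "(m*(bb-e))^2 = m*m*(bb-e)^2" by (simp add: power_mult_distrib power2_eq_square)
      ultimately show ?thesis by simp
    qed
    also have "\<dots> = m*m" using one by simp
    also have "\<dots> \<le> l*l + l*m + m*m" using assms(3,4) by simp
    finally show False using assms(9) by simp
  qed
qed

lemma polyB:
  fixes aa bb p cq :: real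
  assumes "2*(aa*p + bb*(p/2 + cq)) = 1" "aa \<le> 0" "aa + bb \<ge> 0" "bb > 0" "cq < 0"
    "p*p \<le> 1" "aa*aa + aa*bb + bb*bb = 1"
  shows False
proof -
  define X where "X = 2*aa + bb"
  have "X*X = (aa*aa + aa*bb + bb*bb) + 3*(aa*(aa+bb))" by (simp add: X_def algebra_simps)
  moreover have "aa*(aa+bb) \<le> 0" using assms(2,3) by (simp add: mult_nonpos_nonneg)
  ultimately have X1: "X*X \<le> 1" using assms(7) by simp
  have "(X*X)*(p*p) \<le> 1" by (rule mult_le_one[OF X1 _ assms(6)]) simp
  moreover have "(X*p)*(X*p) = (X*X)*(p*p)" by (simp add: algebra_simps)
  ultimately have XX: "(X*p)*(X*p) \<le> 1" by linarith
  have Xp: "X*p \<le> 1"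
  proof (rule ccontr)
    assume "\<not> X*p \<le> 1"
    then have g: "1 < X*p" by simp
    have "1*1 < (X*p)*(X*p)" by (rule mult_strict_mono) (use g in auto)
    then show False using XX by simp
  qed
  have "X*p + 2*(bb*cq) = 1" using assms(1) by (simp add: X_def algebra_simps)
  moreover have "bb*cq < 0" using assms(4,5) by (simp add: mult_pos_neg)
  ultimately show False using Xp by linarith
qed

lemma tri_compact:
  assumes "unit_triangle t" shows "compact t"
  using assms unfolding unit_triangle_def
  by (metis compact_convex_hull finite.emptyI finite.insertI finite_imp_compact)



lemma orient:
  fixes b x y p :: pt
  assumes "t = convex hull {b, b+x, b+y}" "norm x = 1" "norm y = 1" "x \<bullet> y = 1/2"
    "x$3 \<ge> 0" "y$3 \<ge> 0" "\<not>(x$3 = 0 \<and> y$3 = 0)" "p \<in> t" "p \<noteq> b" "p$3 = b$3"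
  shows "\<exists>u w k. t = convex hull {b, b+u, b+w} \<and> norm u = 1 \<and> norm w = 1 \<and> u \<bullet> w = 1/2
           \<and> u$3 = 0 \<and> w$3 > 0 \<and> k > 0 \<and> p = b + k *\<^sub>R u"
proof -
  obtain l m where lm: "l \<ge> 0" "m \<ge> 0" "l + m \<le> 1" "p = b + l *\<^sub>R x + m *\<^sub>R y"
    using assms(1,8) ch3 by blast
  have "l * x$3 + m * y$3 = 0" using lm(4) assms(10) by simp
  moreover have "l * x$3 \<ge> 0" "m * y$3 \<ge> 0" using lm assms(5,6) by simp_all
  ultimately have z: "l * x$3 = 0" "m * y$3 = 0" by linarith+
  show ?thesis
  proof (cases "x$3 > 0")
    case True
    then have l0: "l = 0" using z by simp
    then have "m \<noteq> 0" using lm(4) assms(9) by auto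
    then have "y$3 = 0" "m > 0" using z lm(2) by auto
    moreover have "t = convex hull {b, b+y, b+x}" using assms(1) by (simp add: insert_commute)
    ultimately show ?thesis using True assms(2,3,4) lm(4) l0
      by (intro exI[of _ y] exI[of _ x] exI[of _ m]) (auto simp: inner_commute)
  next
    case False
    then have x3: "x$3 = 0" using assms(5) by simp
    then have y3: "y$3 > 0" using assms(6,7) by simp
    then have m0: "m = 0" using z by simp
    then have "l \<noteq> 0" using lm(4) assms(9) by auto
    then have "l > 0" using lm(1) by simp
    then show ?thesis using x3 y3 assms(1-4) lm(4) m0
      by (intro exI[of _ x] exI[of _ y] exI[of _ l]) auto
  qed
qed



theorem mainTheorem9:
  fixes Q P :: "pt set" and T :: "pt set set" and b :: pt
    and e1 e2 t1 t2 t3 :: "pt set"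
  assumes dome: "dome Q P T"
    and P_plane: "P \<subseteq> {x. x $ 3 = 0}"
    and above: "Q \<subseteq> {x. x $ 3 \<ge> 0}"
    and vertex: "b extreme_point_of P"
    and angle: "face_angle P b \<ge> 2 * pi / 3"
    and e1: "e1 face_of P" "aff_dim e1 = 1" "b \<in> e1"
    and e2: "e2 face_of P" "aff_dim e2 = 1" "b \<in> e2"
    and e12: "e1 \<noteq> e2"
    and incident: "{t \<in> T. b \<in> t} = {t1, t2, t3}"
    and distinct: "t1 \<noteq> t2" "t2 \<noteq> t3" "t1 \<noteq> t3"
    and t1e1: "aff_dim (t1 \<inter> e1) = 1"
    and t3e2: "aff_dim (t3 \<inter> e2) = 1"
    and t12: "aff_dim (t1 \<inter> t2) = 1"
    and t23: "aff_dim (t2 \<inter> t3) = 1"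
    and down: "downward_normal Q t1"
  shows "\<not> coplanar (t1 \<union> t2) \<and>
         (\<forall>F. F facet_of Q \<and> F \<noteq> P \<and> t1 \<subseteq> F \<longrightarrow> face_angle F b = pi / 3)"
proof -
  have polyQ: "polytope Q" and adQ: "aff_dim Q = 3" and PfQ: "P facet_of Q"
    and finT: "finite T" and triT: "\<And>t. t \<in> T \<Longrightarrow> unit_triangle t"
    and inF: "\<And>t. t \<in> T \<Longrightarrow> \<exists>F. F facet_of Q \<and> F \<noteq> P \<and> t \<subseteq> F"
    and cover: "\<And>F. F facet_of Q \<Longrightarrow> F \<noteq> P \<Longrightarrow> \<Union>{t\<in>T. t \<subseteq> F} = F"
    and disj: "\<And>t t'. t \<in> T \<Longrightarrow> t' \<in> T \<Longrightarrow> t \<noteq> t' \<Longrightarrow> rel_interior t \<inter> rel_interior t' = {}"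
  proof -
    note D = dome[unfolded dome_def]
    show "polytope Q" using D[THEN conjunct1] .
    show "aff_dim Q = 3" using D[THEN conjunct2, THEN conjunct1] .
    show "P facet_of Q" using D[THEN conjunct2, THEN conjunct2, THEN conjunct1] .
    show "finite T" using D[THEN conjunct2, THEN conjunct2, THEN conjunct2, THEN conjunct2, THEN conjunct1] .
    show "\<And>t. t \<in> T \<Longrightarrow> unit_triangle t" using D[THEN conjunct2, THEN conjunct2, THEN conjunct2, THEN conjunct2, THEN conjunct2, THEN conjunct1] by simp
    show "\<And>t. t \<in> T \<Longrightarrow> \<exists>F. F facet_of Q \<and> F \<noteq> P \<and> t \<subseteq> F" using D[THEN conjunct2, THEN conjunct2, THEN conjunct2, THEN conjunct2, THEN conjunct2, THEN conjunct2, THEN conjunct1] by simp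
    show "\<And>F. F facet_of Q \<Longrightarrow> F \<noteq> P \<Longrightarrow> \<Union>{t\<in>T. t \<subseteq> F} = F" using D[THEN conjunct2, THEN conjunct2, THEN conjunct2, THEN conjunct2, THEN conjunct2, THEN conjunct2, THEN conjunct2, THEN conjunct1] by simp
    show "\<And>t t'. t \<in> T \<Longrightarrow> t' \<in> T \<Longrightarrow> t \<noteq> t' \<Longrightarrow> rel_interior t \<inter> rel_interior t' = {}"
      using D[THEN conjunct2, THEN conjunct2, THEN conjunct2, THEN conjunct2, THEN conjunct2, THEN conjunct2, THEN conjunct2, THEN conjunct2] by simp
  qed
  have tin: "t1 \<in> T" "t2 \<in> T" "t3 \<in> T" "b \<in> t1" "b \<in> t2" "b \<in> t3"
    using incident by blast+
  have incid: "\<And>t. t \<in> T \<Longrightarrow> b \<in> t \<Longrightarrow> t = t1 \<or> t = t2 \<or> t = t3"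
    using incident by blast
  have PfaceQ: "P face_of Q" using PfQ by (simp add: facet_of_def)
  have PQ: "P \<subseteq> Q" using face_of_imp_subset[OF PfaceQ] .
  have bP: "b \<in> P" using vertex by (simp add: extreme_point_of_def)
  have b3: "b$3 = 0" using bP P_plane by auto
  have bQ: "b extreme_point_of Q" using extreme_point_of_face[OF PfaceQ] vertex bP by blast
  have tQ: "\<And>t. t \<in> T \<Longrightarrow> t \<subseteq> Q"
    using inF facet_of_def face_of_imp_subset by blast
  have bext: "\<And>t. t \<in> T \<Longrightarrow> b \<in> t \<Longrightarrow> b extreme_point_of t"
    using bQ tQ unfolding extreme_point_of_def by blast
  have up: "\<And>x. x \<in> Q \<Longrightarrow> x$3 \<ge> 0" using above by auto
  have cQ: "convex Q" using polyQ polytope_imp_convex by blast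
  have facet2: "\<And>F. F facet_of Q \<Longrightarrow> aff_dim F = 2" using adQ by (simp add: facet_of_def)
  have hullF: "affine hull t = affine hull F" if "t \<subseteq> F" "aff_dim t = 2" "aff_dim F = 2" "t \<noteq> {}" for t F :: "pt set"
    by (rule affine_dim_equal) (use that in \<open>auto simp: hull_mono\<close>)
  have vtx: "\<And>t x. t \<in> T \<Longrightarrow> b + x \<in> t \<Longrightarrow> x$3 \<ge> 0"
    using tQ up b3 by fastforce
  have nothor: "\<not>(x$3 = 0 \<and> y$3 = 0)"
    if hyp: "t \<in> T" "t = convex hull {b, b+x, b+y}" "norm x = 1" "norm y = 1" "x \<bullet> y = 1/2" for t x y
  proof
    assume h: "x$3 = 0 \<and> y$3 = 0"
    obtain F where F: "F facet_of Q" "F \<noteq> P" "t \<subseteq> F" using inF[OF hyp(1)] by blast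
    have at: "aff_dim t = 2" using affdim_tri[OF hyp(3-5)] hyp(2) by simp
    have "t \<noteq> {}" using hyp(2) by simp
    then have hh: "affine hull t = affine hull F" using hullF[OF F(3) at facet2[OF F(1)]] by simp
    have "{b, b+x, b+y} \<subseteq> {z. axis 3 1 \<bullet> z = 0}" using h b3 by (simp add: ez3)
    then have "t \<subseteq> {z. axis 3 1 \<bullet> z = 0}" unfolding hyp(2)
      by (rule hull_minimal) (rule convex_hyperplane)
    then have "affine hull t \<subseteq> {z. axis 3 1 \<bullet> z = 0}"
      by (rule hull_minimal) (rule affine_hyperplane)
    then have "F \<subseteq> {z. z$3 = 0}" using hh hull_subset[of F affine] by (auto simp: ez3)
    then have "F = P" using facet_floor[OF polyQ adQ above F(1) _ PfQ P_plane] by blast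
    then show False using F(2) by simp
  qed
  obtain x1 y1 where T1: "t1 = convex hull {b, b+x1, b+y1}" "norm x1 = 1" "norm y1 = 1" "x1 \<bullet> y1 = 1/2"
    using tri_vertex[OF triT[OF tin(1)] bext[OF tin(1,4)]] by blast
  obtain p1 where p1: "p1 \<in> t1 \<inter> e1" "p1 \<noteq> b" using one_dim_other[OF t1e1] tin(4) e1(3) by blast
  have e1P: "e1 \<subseteq> P" using e1(1) face_of_imp_subset by blast
  have e2P: "e2 \<subseteq> P" using e2(1) face_of_imp_subset by blast
  have p13: "p1$3 = b$3" using p1 e1P P_plane b3 by auto
  obtain u1 w1 k1 where U1: "t1 = convex hull {b, b+u1, b+w1}" "norm u1 = 1" "norm w1 = 1" "u1 \<bullet> w1 = 1/2"
      "u1$3 = 0" "w1$3 > 0" "k1 > 0" "p1 = b + k1 *\<^sub>R u1"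
  proof -
    have "b + x1 \<in> t1" "b + y1 \<in> t1" unfolding T1(1) by (simp_all add: hull_inc)
    then have "x1$3 \<ge> 0" "y1$3 \<ge> 0" using vtx tin(1) by blast+
    note o = orient[OF T1 this nothor[OF tin(1) T1] _ p1(2) p13]
    have "p1 \<in> t1" using p1(1) by blast
    from o[OF this] show thesis using that by blast
  qed
  obtain x3 y3' where T3: "t3 = convex hull {b, b+x3, b+y3'}" "norm x3 = 1" "norm y3' = 1" "x3 \<bullet> y3' = 1/2"
    using tri_vertex[OF triT[OF tin(3)] bext[OF tin(3,6)]] by blast
  obtain p3 where p3: "p3 \<in> t3 \<inter> e2" "p3 \<noteq> b" using one_dim_other[OF t3e2] tin(6) e2(3) by blast
  have p33: "p3$3 = b$3" using p3 e2P P_plane b3 by auto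
  obtain u2 y3 k2 where U3: "t3 = convex hull {b, b+u2, b+y3}" "norm u2 = 1" "norm y3 = 1" "u2 \<bullet> y3 = 1/2"
      "u2$3 = 0" "y3$3 > 0" "k2 > 0" "p3 = b + k2 *\<^sub>R u2"
  proof -
    have "b + x3 \<in> t3" "b + y3' \<in> t3" unfolding T3(1) by (simp_all add: hull_inc)
    then have "x3$3 \<ge> 0" "y3'$3 \<ge> 0" using vtx tin(3) by blast+
    note o = orient[OF T3 this nothor[OF tin(3) T3] _ p3(2) p33]
    have "p3 \<in> t3" using p3(1) by blast
    from o[OF this] show thesis using that by blast
  qed
  have pe1: "b + k1 *\<^sub>R u1 \<in> e1" using p1(1) U1(8) by blast
  have pe2: "b + k2 *\<^sub>R u2 \<in> e2" using p3(1) U3(8) by blast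
  have u21: "u2 \<noteq> u1"
  proof
    assume eq: "u2 = u1"
    define m where "m = min k1 k2"
    have m0: "m > 0" "m \<le> k1" "m \<le> k2" using U1(7) U3(7) by (auto simp: m_def)
    have in1: "b + m *\<^sub>R u1 \<in> e1"
      by (rule seg_in[OF face_of_imp_convex[OF e1(1)] e1(3) pe1]) (use m0 U1(7) in auto)
    have in2: "b + m *\<^sub>R u1 \<in> e2"
    proof -
      have pe2': "b + k2 *\<^sub>R u1 \<in> e2" using pe2 eq by simp
      show ?thesis by (rule seg_in[OF face_of_imp_convex[OF e2(1)] e2(3) pe2']) (use m0 U3(7) in auto)
    qed
    have neq: "b \<noteq> b + m *\<^sub>R u1" using m0 U1(2) by auto
    have ge1: "aff_dim (e1 \<inter> e2) \<ge> 1"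
    proof -
      have "aff_dim {b, b + m *\<^sub>R u1} \<le> aff_dim (e1 \<inter> e2)"
        by (rule aff_dim_subset) (use in1 in2 e1(3) e2(3) in auto)
      then show ?thesis using neq by simp
    qed
    have fi: "(e1 \<inter> e2) face_of P" using face_of_Int[OF e1(1) e2(1)] .
    have "e1 \<inter> e2 = e1"
    proof (rule ccontr)
      assume "e1 \<inter> e2 \<noteq> e1"
      moreover have "(e1 \<inter> e2) face_of e1" using face_of_subset[OF fi] e1P by blast
      ultimately have "aff_dim (e1 \<inter> e2) < aff_dim e1"
        using face_of_aff_dim_lt[OF face_of_imp_convex[OF e1(1)]] by blast
      then show False using ge1 e1(2) by simp
    qed
    moreover have "e1 \<inter> e2 = e2"
    proof (rule ccontr)
      assume "e1 \<inter> e2 \<noteq> e2"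
      moreover have "(e1 \<inter> e2) face_of e2" using face_of_subset[OF fi] e2P by blast
      ultimately have "aff_dim (e1 \<inter> e2) < aff_dim e2"
        using face_of_aff_dim_lt[OF face_of_imp_convex[OF e2(1)]] by blast
      then show False using ge1 e2(2) by simp
    qed
    ultimately show False using e12 by simp
  qed
  have u21': "u2 \<noteq> -u1"
  proof
    assume eq: "u2 = -u1"
    define a where "a = b + k1 *\<^sub>R u1"
    define c where "c = b - k2 *\<^sub>R u1"
    have aP: "a \<in> P" using pe1 e1P by (auto simp: a_def)
    have cP: "c \<in> P" using pe2 e2P eq by (auto simp: c_def)
    have "b \<in> open_segment a c"
    proof -
      define th where "th = k1 / (k1 + k2)"
      have th: "0 < th" "th < 1" using U1(7) U3(7) by (auto simp: th_def)
      have "a - c = (k1 + k2) *\<^sub>R u1" by (simp add: a_def c_def algebra_simps)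
      moreover have "(k1 + k2) *\<^sub>R u1 \<noteq> 0" using U1(7) U3(7) U1(2) by auto
      ultimately have "a \<noteq> c" by auto
      moreover have "b = (1 - th) *\<^sub>R a + th *\<^sub>R c"
      proof -
        have "(1 - th) * k1 - th * k2 = 0" using U1(7) U3(7) by (simp add: th_def field_simps)
        have "(1 - th) *\<^sub>R a + th *\<^sub>R c = b + ((1 - th) * k1 - th * k2) *\<^sub>R u1"
          by (simp add: a_def c_def algebra_simps)
        also have "\<dots> = b" using \<open>(1 - th) * k1 - th * k2 = 0\<close> by simp
        finally show ?thesis by simp
      qed
      ultimately show ?thesis using th by (auto simp: in_segment)
    qed
    then show False using vertex aP cP by (auto simp: extreme_point_of_def)
  qed
  obtain n d where nd: "n$3 < 0" "\<And>x. x \<in> Q \<Longrightarrow> n \<bullet> x \<le> d" "\<And>x. x \<in> t1 \<Longrightarrow> n \<bullet> x = d"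
    using down unfolding downward_normal_def by blast
  have t1pts: "b \<in> t1" "b + u1 \<in> t1" "b + w1 \<in> t1" unfolding U1(1) by (simp_all add: hull_inc)
  have t3pts: "b + u2 \<in> t3" "b + y3 \<in> t3" unfolding U3(1) by (simp_all add: hull_inc)
  have nb: "n \<bullet> b = d" using nd(3) t1pts(1) .
  have nu1: "n \<bullet> u1 = 0" using nd(3)[OF t1pts(2)] nb by (simp add: inner_add_right)
  have nw1: "n \<bullet> w1 = 0" using nd(3)[OF t1pts(3)] nb by (simp add: inner_add_right)
  have nu2: "n \<bullet> u2 \<le> 0" using nd(2)[of "b+u2"] t3pts(1) tQ[OF tin(3)] nb by (auto simp: inner_add_right)
  have ny3: "n \<bullet> y3 \<le> 0" using nd(2)[of "b+y3"] t3pts(2) tQ[OF tin(3)] nb by (auto simp: inner_add_right)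
  note fr = frame[OF U1(5) U1(2)]
  define c where "c = cfr u1 w1"
  define s where "s = w1$3"
  define p where "p = u2 \<bullet> u1"
  define q where "q = cfr u1 u2"
  define nf where "nf = cfr u1 n"
  have s0: "s > 0" using U1(6) by (simp add: s_def)
  have u1u1: "u1 \<bullet> u1 = 1" using U1(2) by (simp add: dot_square_norm)
  have w1u1: "w1 \<bullet> u1 = 1/2" using U1(4) by (simp add: inner_commute)
  have nw1c: "nf * c + n$3 * s = 0" using fr[of n w1] nw1 nu1 by (simp add: nf_def c_def s_def)
  have nu2c: "n \<bullet> u2 = nf * q" using fr[of n u2] nu1 U3(5) by (simp add: nf_def q_def)
  have pq: "p*p + q*q = 1"
  proof -
    have "u2 \<bullet> u2 = 1" using U3(2) by (simp add: dot_square_norm)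
    then show ?thesis using fr[of u2 u2] U3(5) by (simp add: p_def q_def)
  qed
  have q0: "q \<noteq> 0"
  proof
    assume q0: "q = 0"
    have "u2 = p *\<^sub>R u1"
      by (rule frame_eq[OF U1(5) U1(2)]) (use q0 U3(5) U1(5) u1u1 in \<open>simp_all add: p_def q_def cfr_def algebra_simps\<close>)
    moreover have "p = 1 \<or> p = -1" using pq q0 by (simp add: square_eq_1_iff)
    ultimately show False using u21 u21' by auto
  qed
  have nf0: "nf \<noteq> 0" using nw1c nd(1) s0 by auto
  have nu2neg: "n \<bullet> u2 < 0"
  proof -
    have "nf * q \<noteq> 0" using nf0 q0 by simp
    then show ?thesis using nu2 nu2c by linarith
  qed
  have cq: "c * q < 0"
  proof -
    have a: "nf * c > 0" using nw1c nd(1) s0 by (smt (verit) mult_neg_pos)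
    have b: "nf * q < 0" using nu2neg nu2c by simp
    have "(nf * c) * (nf * q) < 0" using a b by (simp add: mult_pos_neg)
    then have "(nf * nf) * (c * q) < 0" by (simp add: algebra_simps)
    moreover have "nf * nf > 0" using nf0 not_real_square_gt_zero by blast
    ultimately show ?thesis by (simp add: mult_less_0_iff)
  qed
  have at1: "aff_dim t1 = 2" using affdim_tri[OF U1(2-4)] U1(1) by simp
  have t1ne: "t1 \<noteq> {}" using t1pts by blast
  have Hsub: "affine hull t1 \<subseteq> {x. n \<bullet> x = d}"
    by (rule hull_minimal) (use nd(3) affine_hyperplane in auto)
  have notcop: "\<not> coplanar (t1 \<union> t2)"
  proof
    assume cop: "coplanar (t1 \<union> t2)"
    obtain a a' a'' where A: "t1 \<union> t2 \<subseteq> affine hull {a, a', a''}"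
      using cop unfolding coplanar_def by blast
    have hh: "affine hull t1 = affine hull {a, a', a''}"
    proof (rule affine_dim_equal)
      show "affine (affine hull t1)" by simp
      show "affine (affine hull {a,a',a''})" by simp
      show "affine hull t1 \<noteq> {}" using t1ne by simp
      show sub: "affine hull t1 \<subseteq> affine hull {a,a',a''}"
        by (rule hull_minimal) (use A in auto)
      have "aff_dim {a,a',a''} \<le> of_nat (card {a,a',a''}) - 1" by (rule aff_dim_le_card) simp
      moreover have "card {a,a',a''} \<le> 3" by (auto simp: card_insert_if)
      ultimately have le: "aff_dim (affine hull {a,a',a''}) \<le> 2" by simp
      have ge: "aff_dim (affine hull t1) \<le> aff_dim (affine hull {a,a',a''})"
        by (rule aff_dim_subset[OF sub])
      show "aff_dim (affine hull t1) = aff_dim (affine hull {a,a',a''})" using le ge at1 by simp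
    qed
    have t2H: "t2 \<subseteq> affine hull t1" using A hh by auto
    have t2n: "t2 \<subseteq> {x. n \<bullet> x = d}" using t2H Hsub by auto
    obtain x2 y2 where T2: "t2 = convex hull {b, b+x2, b+y2}" "norm x2 = 1" "norm y2 = 1" "x2 \<bullet> y2 = 1/2"
      using tri_vertex[OF triT[OF tin(2)] bext[OF tin(2,5)]] by blast
    have convt2: "convex t2" using T2(1) by simp
    obtain qq where qq: "qq \<in> t2 \<inter> t3" "qq \<noteq> b" using one_dim_other[OF t23] tin(5,6) by blast
    obtain al be where q2: "al \<ge> 0" "be \<ge> 0" "al + be \<le> 1" "qq = b + al *\<^sub>R x2 + be *\<^sub>R y2"
      using qq(1) T2(1) ch3 by blast
    obtain rho ka where q3: "rho \<ge> 0" "ka \<ge> 0" "rho + ka \<le> 1" "qq = b + rho *\<^sub>R u2 + ka *\<^sub>R y3"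
      using qq(1) U3(1) ch3 by blast
    have "n \<bullet> qq = d" using t2n qq(1) by auto
    then have sum0: "rho * (n \<bullet> u2) + ka * (n \<bullet> y3) = 0" using q3(4) nb by (simp add: inner_add_right)
    have "rho * (n \<bullet> u2) \<le> 0" using q3(1) nu2 by (simp add: mult_nonneg_nonpos)
    moreover have "ka * (n \<bullet> y3) \<le> 0" using q3(2) ny3 by (simp add: mult_nonneg_nonpos)
    ultimately have z1: "rho * (n \<bullet> u2) = 0" and z2: "ka * (n \<bullet> y3) = 0" using sum0 by linarith+
    then have rho0: "rho = 0" using nu2neg by simp
    have qy: "qq = b + ka *\<^sub>R y3" using q3(4) rho0 by simp
    have ka0: "ka > 0" using qy qq(2) q3(2) by (cases "ka = 0") auto
    have ny3z: "n \<bullet> y3 = 0" using z2 ka0 by simp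
    define Y1 where "Y1 = y3 \<bullet> u1"
    define Y2 where "Y2 = cfr u1 y3"
    define Y3 where "Y3 = y3$3"
    have Y3p: "Y3 > 0" using U3(6) by (simp add: Y3_def)
    have nY: "nf * Y2 + n$3 * Y3 = 0" using fr[of n y3] ny3z nu1 by (simp add: nf_def Y2_def Y3_def)
    have "nf * (Y2 * s) = nf * (Y3 * c)"
    proof -
      have nn: "nf * Y2 = - (n$3 * Y3)" using nY by linarith
      have "nf * (Y2 * s) = (nf * Y2) * s" by simp
      also have "\<dots> = - (n$3 * Y3) * s" using nn by simp
      also have "\<dots> = Y3 * (- (n$3 * s))" by simp
      also have "\<dots> = Y3 * (nf * c)"
      proof -
        have "nf * c = - (n$3 * s)" using nw1c by linarith
        then show ?thesis by simp
      qed
      finally show ?thesis by simp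
    qed
    then have "Y2 * s = Y3 * c" using nf0 by simp
    then have Y2c: "Y2 = Y3 / s * c" using s0 by (simp add: field_simps)
    define bb where "bb = Y3 / s"
    define aa where "aa = Y1 - bb/2"
    have bb0: "bb > 0" using Y3p s0 by (simp add: bb_def)
    have y3eq: "y3 = aa *\<^sub>R u1 + bb *\<^sub>R w1"
    proof (rule frame_eq[OF U1(5) U1(2)])
      show "y3 \<bullet> u1 = (aa *\<^sub>R u1 + bb *\<^sub>R w1) \<bullet> u1"
        using u1u1 w1u1 by (simp add: inner_add_left aa_def Y1_def)
      show "cfr u1 y3 = cfr u1 (aa *\<^sub>R u1 + bb *\<^sub>R w1)"
        by (simp add: cfr_lin cfr_self Y2_def[symmetric] Y2c bb_def c_def)
      show "y3$3 = (aa *\<^sub>R u1 + bb *\<^sub>R w1)$3"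
        using U1(5) s0 by (simp add: bb_def Y3_def s_def)
    qed
    have u1w1: "u1 \<bullet> w1 = 1/2" using U1(4) .
    have w1w1: "w1 \<bullet> w1 = 1" using U1(3) by (simp add: dot_square_norm)
    have y3n: "aa*aa + aa*bb + bb*bb = 1"
    proof -
      have "y3 \<bullet> y3 = 1" using U3(3) by (simp add: dot_square_norm)
      then show ?thesis unfolding y3eq
        by (simp add: inner_add_left inner_add_right u1u1 w1w1 u1w1 w1u1 algebra_simps)
    qed
    have w1u2: "w1 \<bullet> u2 = p/2 + c*q"
      using fr[of w1 u2] w1u1 U3(5) by (simp add: p_def c_def q_def)
    have u1u2: "u1 \<bullet> u2 = p" by (simp add: p_def inner_commute)
    have y3u2: "2*(aa*p + bb*(p/2 + c*q)) = 1"
    proof -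
      have "y3 \<bullet> u2 = 1/2" using U3(4) by (simp add: inner_commute)
      then show ?thesis unfolding y3eq using w1u2 u1u2 by (simp add: inner_add_left algebra_simps)
    qed
    have aa_le: "aa \<le> 0"
    proof (rule ccontr)
      assume "\<not> aa \<le> 0"
      then have aa0: "aa > 0" by simp
      define e where "e = min ka (1/(2*(aa+bb)))"
      have ab0: "aa + bb > 0" using aa0 bb0 by simp
      have e: "e > 0" "e \<le> ka" using ka0 ab0 by (auto simp: e_def)
      have "e * (aa+bb) \<le> (1/(2*(aa+bb))) * (aa+bb)"
        using ab0 by (intro mult_right_mono) (auto simp: e_def)
      also have "\<dots> = 1/2" using ab0 by simp
      finally have e3: "e*aa + e*bb \<le> 1/2" by (simp add: algebra_simps)
      have r1: "b + (e*aa) *\<^sub>R u1 + (e*bb) *\<^sub>R w1 \<in> rel_interior t1"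
        unfolding U1(1) by (rule relint_tri[OF U1(2-4)]) (use e aa0 bb0 e3 in auto)
      have qt2: "b + ka *\<^sub>R y3 \<in> t2" using qq(1) qy by blast
      have r2: "b + e *\<^sub>R y3 \<in> t2"
        by (rule seg_in[OF convt2 tin(5) qt2]) (use e ka0 in auto)
      have eq: "b + e *\<^sub>R y3 = b + (e*aa) *\<^sub>R u1 + (e*bb) *\<^sub>R w1"
        by (simp add: y3eq algebra_simps)
      have "rel_interior t1 \<inter> rel_interior t2 \<noteq> {}"
        by (rule relint_meet[OF convt2 t2H r1]) (use r2 eq in simp)
      then show False using disj[OF tin(1,2) distinct(1)] by simp
    qed
    have ab_ge: "aa + bb \<ge> 0"
    proof (rule ccontr)
      assume neg: "\<not> aa + bb \<ge> 0"
      obtain r where r: "r \<in> t1 \<inter> t2" "r \<noteq> b" using one_dim_other[OF t12] tin(4,5) by blast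
      obtain l m where r1: "l \<ge> 0" "m \<ge> 0" "l + m \<le> 1" "r = b + l *\<^sub>R u1 + m *\<^sub>R w1"
        using r(1) U1(1) ch3 by blast
      obtain al' be' where r2: "al' \<ge> 0" "be' \<ge> 0" "al' + be' \<le> 1" "r = b + al' *\<^sub>R x2 + be' *\<^sub>R y2"
        using r(1) T2(1) ch3 by blast
      have cn: "norm (al *\<^sub>R x2 + be *\<^sub>R y2) * norm (al' *\<^sub>R x2 + be' *\<^sub>R y2)
               \<le> 2 * ((al *\<^sub>R x2 + be *\<^sub>R y2) \<bullet> (al' *\<^sub>R x2 + be' *\<^sub>R y2))"
        by (rule cone60[OF T2(2-4) q2(1,2) r2(1,2)])
      have v1: "al *\<^sub>R x2 + be *\<^sub>R y2 = ka *\<^sub>R y3"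
      proof -
        have "b + (al *\<^sub>R x2 + be *\<^sub>R y2) = b + ka *\<^sub>R y3" using q2(4) qy by (simp add: add.assoc)
        then show ?thesis by simp
      qed
      define z where "z = l *\<^sub>R u1 + m *\<^sub>R w1"
      have v2: "al' *\<^sub>R x2 + be' *\<^sub>R y2 = z"
      proof -
        have "b + (al' *\<^sub>R x2 + be' *\<^sub>R y2) = b + z" using r1(4) r2(4) by (simp add: add.assoc z_def)
        then show ?thesis by simp
      qed
      have "ka * norm z \<le> 2 * (ka * (y3 \<bullet> z))" using cn unfolding v1 v2 using ka0 U3(3) by simp
      then have "ka * norm z \<le> ka * (2 * (y3 \<bullet> z))" by simp
      then have nz: "norm z \<le> 2 * (y3 \<bullet> z)" using ka0 by (rule mult_left_le_imp_le)
      have yz: "y3 \<bullet> z = aa*l + aa*m/2 + bb*l/2 + bb*m"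
        unfolding y3eq z_def
        by (simp add: inner_add_left inner_add_right u1u1 w1w1 u1w1 w1u1 algebra_simps)
      have zz: "z \<bullet> z = l*l + l*m + m*m"
        unfolding z_def
        by (simp add: inner_add_left inner_add_right u1u1 w1w1 u1w1 w1u1 algebra_simps)
      have "z \<noteq> 0" using r(2) r1(4) by (auto simp: z_def)
      then have zpos: "l*l + l*m + m*m > 0" using zz by (metis inner_gt_zero_iff)
      define L where "L = 2 * (y3 \<bullet> z)"
      have L0: "L \<ge> 0" using nz by (simp add: L_def) (smt (verit) norm_ge_zero)
      have "(norm z)^2 \<le> L^2" by (rule power_mono) (use nz in \<open>simp_all add: L_def\<close>)
      then have L2: "L^2 \<ge> l*l + l*m + m*m" using zz by (simp add: power2_norm_eq_inner)
      show False
        using polyA[of aa bb l m L] neg bb0 r1(1,2) zpos y3n L0 L2 yz by (simp add: L_def)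
    qed
    have "p*p \<le> 1" using pq by (smt (verit) zero_le_square)
    then show False using polyB[OF y3u2 aa_le ab_ge bb0 cq _ y3n] by simp
  qed
  have ahT1: "affine hull t1 = affine hull {b, b+u1, b+w1}"
    unfolding U1(1) by (rule affine_hull_convex_hull)
  have part2: "face_angle F b = pi / 3" if F: "F facet_of Q" "F \<noteq> P" "t1 \<subseteq> F" for F
  proof -
    have aF: "aff_dim F = 2" using facet2[OF F(1)] .
    have convF: "convex F" using F(1) unfolding facet_of_def using face_of_imp_convex by blast
    have hF: "affine hull t1 = affine hull F" using hullF[OF F(3) at1 aF t1ne] .
    have FaH: "F \<subseteq> affine hull t1" using hF hull_subset[of F affine] by simp
    have FH: "F \<subseteq> {x. n \<bullet> x = d}" using FaH Hsub by blast
    have FU: "\<Union>{t\<in>T. t \<subseteq> F} = F" using cover[OF F(1,2)] .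
    define U where "U = \<Union>{t\<in>T. b \<notin> t}"
    have clU: "closed U" unfolding U_def
    proof (rule closed_Union)
      show "finite {t \<in> T. b \<notin> t}" using finT by simp
      show "\<forall>t\<in>{t \<in> T. b \<notin> t}. closed t"
        using triT tri_compact compact_imp_closed by blast
    qed
    have bU: "b \<notin> U" by (auto simp: U_def)
    obtain eps where eps: "eps > 0" "ball b eps \<subseteq> - U"
      using clU bU unfolding closed_def open_contains_ball by blast
    have bF: "b \<in> F" using F(3) t1pts(1) by blast
    have cone: "\<exists>l m. l \<ge> 0 \<and> m \<ge> 0 \<and> x = b + l *\<^sub>R u1 + m *\<^sub>R w1" if xF: "x \<in> F" for x
    proof (cases "x = b")
      case True then show ?thesis by (intro exI[of _ 0] exI[of _ 0]) simp
    next
      case False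
      define nx where "nx = norm (x - b)"
      have nx0: "nx > 0" using False by (simp add: nx_def)
      define del where "del = min 1 (eps / (2*nx))"
      have del: "del > 0" "del \<le> 1" using eps nx0 by (auto simp: del_def)
      define y where "y = b + del *\<^sub>R (x - b)"
      have "b + 1 *\<^sub>R (x - b) \<in> F" using xF by simp
      then have yF: "y \<in> F" unfolding y_def by (rule seg_in[OF convF bF]) (use del in auto)
      have "dist b y = del * nx" using del by (simp add: dist_norm nx_def y_def)
      also have "\<dots> \<le> eps/(2*nx) * nx" using nx0 by (intro mult_right_mono) (auto simp: del_def)
      also have "\<dots> = eps/2" using nx0 by simp
      finally have "dist b y < eps" using eps by simp
      then have yU: "y \<notin> U" using eps(2) by auto
      have "y \<in> \<Union>{t\<in>T. t \<subseteq> F}" using yF FU by simp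
      then obtain t where t: "t \<in> T" "t \<subseteq> F" "y \<in> t" by blast
      have bt: "b \<in> t" using t yU by (auto simp: U_def)
      have "t = t1 \<or> t = t2 \<or> t = t3" using incid t(1) bt by blast
      moreover have "t \<noteq> t2"
      proof
        assume "t = t2"
        then have "t1 \<union> t2 \<subseteq> affine hull {b, b+u1, b+w1}" using F(3) t(2) FaH ahT1 by auto
        then have "coplanar (t1 \<union> t2)" unfolding coplanar_def by blast
        then show False using notcop by simp
      qed
      moreover have "t \<noteq> t3"
      proof
        assume "t = t3"
        then have "b + u2 \<in> F" using t3pts(1) t(2) by blast
        then have "n \<bullet> (b + u2) = d" using FH by blast
        then show False using nb nu2neg by (simp add: inner_add_right)
      qed
      ultimately have "t = t1" by blast
      then obtain l m where lm: "l \<ge> 0" "m \<ge> 0" "l + m \<le> 1" "y = b + l *\<^sub>R u1 + m *\<^sub>R w1"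
        using t(3) U1(1) ch3 by blast
      have "del *\<^sub>R (x - b) = l *\<^sub>R u1 + m *\<^sub>R w1"
      proof -
        have "b + del *\<^sub>R (x - b) = b + (l *\<^sub>R u1 + m *\<^sub>R w1)" using lm(4) by (simp add: y_def add.assoc)
        then show ?thesis by simp
      qed
      then have "(1/del) *\<^sub>R (del *\<^sub>R (x - b)) = (1/del) *\<^sub>R (l *\<^sub>R u1 + m *\<^sub>R w1)" by simp
      then have "x - b = (l/del) *\<^sub>R u1 + (m/del) *\<^sub>R w1" using del by (simp add: scaleR_add_right)
      then have "x = b + (l/del) *\<^sub>R u1 + (m/del) *\<^sub>R w1" by (simp add: algebra_simps)
      then show ?thesis using lm del by (intro exI[of _ "l/del"] exI[of _ "m/del"]) auto
    qed
    define S where "S = {vec_angle (x - b) (y - b) | x y. x \<in> F \<and> y \<in> F \<and> x \<noteq> b \<and> y \<noteq> b}"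
    have mem: "pi/3 \<in> S"
    proof -
      have va: "pi/3 = vec_angle ((b+u1) - b) ((b+w1) - b)" by (simp add: vec_angle_def U1(2,3) U1(4))
      have pts: "b + u1 \<in> F" "b + w1 \<in> F" "b + u1 \<noteq> b" "b + w1 \<noteq> b"
        using t1pts F(3) U1(2,3) by auto
      show ?thesis unfolding S_def
        by (intro CollectI exI[of _ "b+u1"] exI[of _ "b+w1"] conjI va pts)
    qed
    have bound: "s \<le> pi/3" if sS: "s \<in> S" for s
    proof -
      obtain x y where xy: "s = vec_angle (x - b) (y - b)" "x \<in> F" "y \<in> F" "x \<noteq> b" "y \<noteq> b"
        using sS unfolding S_def by blast
      obtain l m where x: "l \<ge> 0" "m \<ge> 0" "x = b + l *\<^sub>R u1 + m *\<^sub>R w1" using cone[OF xy(2)] by blast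
      obtain l' m' where y: "l' \<ge> 0" "m' \<ge> 0" "y = b + l' *\<^sub>R u1 + m' *\<^sub>R w1" using cone[OF xy(3)] by blast
      have xb: "x - b = l *\<^sub>R u1 + m *\<^sub>R w1" using x(3) by simp
      have yb: "y - b = l' *\<^sub>R u1 + m' *\<^sub>R w1" using y(3) by simp
      have c6: "norm (x - b) * norm (y - b) \<le> 2 * ((x - b) \<bullet> (y - b))"
        unfolding xb yb by (rule cone60[OF U1(2-4) x(1,2) y(1,2)])
      have np: "norm (x-b) * norm (y-b) > 0" using xy(4,5) by simp
      define r where "r = ((x - b) \<bullet> (y - b)) / (norm (x - b) * norm (y - b))"
      have r1: "r \<ge> 1/2" using c6 np by (simp add: r_def field_simps)
      have r2: "r \<le> 1" using norm_cauchy_schwarz[of "x - b" "y - b"] np by (simp add: r_def field_simps)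
      have "arccos r \<le> arccos (1/2)" by (rule arccos_le_arccos) (use r1 r2 in auto)
      then show ?thesis using xy(1) by (simp add: vec_angle_def r_def)
    qed
    show ?thesis unfolding face_angle_def S_def[symmetric] by (rule cSup_eq_maximum[OF mem bound])
  qed
  show ?thesis using notcop part2 by blast
qed


end
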